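(* Let $n\ge2$ and $n_a,n_b\ge1$ be integers with $n_a\ge n_b$ and $n_a+n_b=n$. (1) If $n_a=n_b=n/2$, then $(n_a,n_b)\in QB(n)$. (2) If $n_a>n_b$, then $(n_a,n_b)\in QB(n)$ if and only if one of the following holds: (i) there exist $k\in\mathbb{N}$ and $p\in\mathbb{N}_{\ge1}$ with $n=2^k(2p+1)$, $n_a=2^k(p+1)$, $n_b=2^kp$; (ii) there exist $k\in\mathbb{N}$, $l\in\mathbb{N}_{\ge2}$, $p\in\mathbb{N}_{\ge1}$ and $t\in\mathbb{N}$ with $0\le t<2^{l-2}$ such that $n=2^k(2^l(2p+1)+2t+1)$, $n_a=2^{k+l}(p+1)$, $n_b=2^k(2^lp+2t+1)$; (iii) there exist $k\in\mathbb{N}$, $l\in\mathbb{N}_{\ge2}$, $p\in\mathbb{N}_{\ge1}$ and $t\in\mathbb{N}$ with $0\le t<2^{l-2}$ such that $n=2^k(2^l(2p+1)-(2t+1))$, $n_a=2^k(2^l(p+1)-(2t+1))$, $n_b=2^{k+l}p$.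
   Context: $\mathbb{N}$ includes $0$; $\mathbb{N}_{\ge m}=\{n\in\mathbb{N}:n\ge m\}$. Bifurcating trees: rooted trees in which every internal node has exactly two children; $\mathcal{T}_n$ is the set of isomorphism classes of bifurcating trees with $n$ leaves. The Colless index is $\mathcal{C}(T)=\sum_{v}|\kappa_T(v_1)-\kappa_T(v_2)|$, summed over internal nodes $v$ with children $v_1,v_2$, where $\kappa_T(w)$ is the number of leaves descending from $w$; $c_n=\min\{\mathcal{C}(T):T\in\mathcal{T}_n\}$. For $n\ge2$, $QB(n)=\{(n_a,n_b)\in\mathbb{N}^2: n_a\ge n_b\ge1,\ n_a+n_b=n,\ c_{n_a}+c_{n_b}+n_a-n_b=c_n\}$. *)

theory Defs
  imports Main
begin

text \<open>Rooted bifurcating trees (plane representatives; the Colless index and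
leaf count are invariant under swapping children, so minimising over plane
trees is the same as minimising over isomorphism classes).\<close>
datatype btree = Leaf | Node btree btree

fun leaves :: "btree \<Rightarrow> nat" where
  "leaves Leaf = 1"
| "leaves (Node l r) = leaves l + leaves r"

fun colless :: "btree \<Rightarrow> nat" where
  "colless Leaf = 0"
| "colless (Node l r) = colless l + colless r
     + nat \<bar>int (leaves l) - int (leaves r)\<bar>"

definition cmin :: "nat \<Rightarrow> nat" where
  "cmin n = (LEAST c. \<exists>T. leaves T = n \<and> colless T = c)"

definition QB :: "nat \<Rightarrow> (nat \<times> nat) set" where
  "QB n = {(na, nb). na \<ge> nb \<and> nb \<ge> 1 \<and> na + nb = n \<and>
                      cmin na + cmin nb + (na - nb) = cmin n}"

end

theory Submission
  imports Defs
begin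


function B :: "nat \<Rightarrow> nat" where
  "B n = (if n \<le> 1 then 0 else if even n then 2 * B (n div 2) else B (n div 2) + B (n div 2 + 1) + 1)"
  by auto
termination by (relation "measure id") (auto elim: oddE)

declare B.simps[simp del]

lemma B0[simp]: "B 0 = 0" by (simp add: B.simps)
lemma B1[simp]: "B (Suc 0) = 0" by (simp add: B.simps)
lemma B_even: "B (2*m) = 2 * B m"
  by (cases "m = 0") (simp_all add: B.simps[of "2*m"])
lemma B_odd: "m \<ge> 1 \<Longrightarrow> B (2*m+1) = B m + B (m+1) + 1"
proof -
  assume m: "m \<ge> 1"
  have "(2*m+1) div 2 = m" by simp
  moreover have "\<not> (2*m+1 \<le> 1)" "odd (2*m+1)" using m by auto
  ultimately show ?thesis using B.simps[of "2*m+1"] by (simp only: if_False)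
qed

definition D :: "nat \<Rightarrow> nat \<Rightarrow> int" where
  "D x y = int (B x) + int (B y) + (int x - int y) - int (B (x+y))"

lemma D_x0: "D x 0 = int x" by (simp add: D_def)
lemma D_xx: "D x x = 0"
proof -
  have "B (x + x) = 2 * B x" by (metis B_even mult_2)
  then show ?thesis unfolding D_def by simp
qed

lemma E1: "D (2*a) (2*b) = 2 * D a b"
proof -
  have "B (2*a+2*b) = 2 * B (a+b)" by (metis B_even distrib_left)
  then show ?thesis unfolding D_def B_even by simp
qed

lemma E2: "b \<ge> 1 \<Longrightarrow> D (2*a) (2*b+1) = D a b + D a (b+1)"
proof -
  assume b: "b \<ge> 1"
  define X where "X = B (2*b+1)"
  define Y where "Y = B (2*(a+b)+1)"
  have e: "2*a + (2*b+1) = 2*(a+b)+1" "a + (b+1) = a+b+1" by simp_all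
  have h1: "X = B b + B (b+1) + 1" unfolding X_def using B_odd[OF b] .
  have h2: "Y = B (a+b) + B (a+b+1) + 1" unfolding Y_def by (rule B_odd) (use b in simp)
  have "D (2*a) (2*b+1) = int (B (2*a)) + int X + (int (2*a) - int (2*b+1)) - int Y"
    unfolding D_def X_def Y_def e ..
  also have "\<dots> = D a b + D a (b+1)" unfolding h1 h2 D_def B_even e by simp
  finally show ?thesis .
qed

lemma E2': "a \<ge> 1 \<Longrightarrow> D (2*a) 1 = D a 1 + (int a - 1)"
proof -
  assume a: "a \<ge> 1"
  define Y where "Y = B (2*a+1)"
  have h2: "Y = B a + B (a+1) + 1" unfolding Y_def by (rule B_odd) (use a in simp)
  have "D (2*a) 1 = int (B (2*a)) + int (B 1) + (int (2*a) - 1) - int Y"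
    unfolding D_def Y_def by simp
  also have "\<dots> = D a 1 + (int a - 1)" unfolding h2 D_def B_even by simp
  finally show ?thesis .
qed

lemma E3: "a \<ge> 1 \<Longrightarrow> b \<ge> 1 \<Longrightarrow> D (2*a+1) (2*b) = D a b + D (a+1) b"
proof -
  assume a: "a \<ge> 1" and b: "b \<ge> 1"
  define X where "X = B (2*a+1)"
  define Y where "Y = B (2*(a+b)+1)"
  have e: "2*a+1 + 2*b = 2*(a+b)+1" "a+1+b = a+b+1" by simp_all
  have h1: "X = B a + B (a+1) + 1" unfolding X_def using B_odd[OF a] .
  have h2: "Y = B (a+b) + B (a+b+1) + 1" unfolding Y_def by (rule B_odd) (use b in simp)
  have "D (2*a+1) (2*b) = int X + int (B (2*b)) + (int (2*a+1) - int (2*b)) - int Y"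
    unfolding D_def X_def Y_def e ..
  also have "\<dots> = D a b + D (a+1) b" 
    unfolding h1 h2 D_def B_even e
    by (simp only: of_nat_add of_nat_mult of_nat_1 algebra_simps)
  finally show ?thesis .
qed

lemma E4: "a \<ge> 1 \<Longrightarrow> b \<ge> 1 \<Longrightarrow> D (2*a+1) (2*b+1) = D (a+1) b + D a (b+1) + 2"
proof -
  assume a: "a \<ge> 1" and b: "b \<ge> 1"
  define X where "X = B (2*a+1)"
  define Z where "Z = B (2*b+1)"
  have e: "2*a+1 + (2*b+1) = 2*(a+b+1)" "a+1+b = a+b+1" "a+(b+1) = a+b+1" by simp_all
  have h1: "X = B a + B (a+1) + 1" unfolding X_def using B_odd[OF a] .
  have h2: "Z = B b + B (b+1) + 1" unfolding Z_def using B_odd[OF b] .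
  have "D (2*a+1) (2*b+1) = int X + int Z + (int (2*a+1) - int (2*b+1)) - int (B (2*(a+b+1)))"
    unfolding D_def X_def Z_def e ..
  also have "\<dots> = D (a+1) b + D a (b+1) + 2" 
    unfolding h1 h2 D_def B_even e
    by (simp only: of_nat_add of_nat_mult of_nat_1 algebra_simps)
  finally show ?thesis .
qed

lemma E4': "a \<ge> 1 \<Longrightarrow> D (2*a+1) 1 = D a 1 + int a + 2"
proof -
  assume a: "a \<ge> 1"
  define X where "X = B (2*a+1)"
  have e: "2*a+1 + 1 = 2*(a+1)" by simp
  have h1: "X = B a + B (a+1) + 1" unfolding X_def using B_odd[OF a] .
  have "D (2*a+1) 1 = int X + int (B 1) + (int (2*a+1) - 1) - int (B (2*(a+1)))"
    unfolding D_def X_def e by simp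
  also have "\<dots> = D a 1 + int a + 2" unfolding h1 D_def B_even
    by (simp only: of_nat_add of_nat_mult of_nat_1 B1 One_nat_def of_nat_0 algebra_simps)
  finally show ?thesis .
qed



lemma par: "(\<exists>a. (x::nat) = 2*a) \<or> (\<exists>a. x = 2*a+1)" by presburger

lemma D_nonneg: "y \<le> x \<Longrightarrow> 0 \<le> D x y"
proof (induction "x+y" arbitrary: x y rule: less_induct)
  case less
  show ?case
  proof (cases "y = 0 \<or> x = y")
    case True
    then show ?thesis using D_x0 D_xx by auto
  next
    case False
    then have y1: "y \<ge> 1" and xy: "y < x" using less.prems by auto
    consider (ee) a b where "x = 2*a" "y = 2*b" | (eo) a b where "x = 2*a" "y = 2*b+1"
      | (oe) a b where "x = 2*a+1" "y = 2*b" | (oo) a b where "x = 2*a+1" "y = 2*b+1"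
      using par[of x] par[of y] by blast
    then show ?thesis
    proof cases
      case ee
      then have "0 \<le> D a b" using less.hyps[of a b] xy y1 by simp
      then show ?thesis using ee E1 by simp
    next
      case eo
      show ?thesis
      proof (cases "b = 0")
        case True
        then have "0 \<le> D a 1" using less.hyps[of a 1] eo xy y1 by simp
        then show ?thesis using eo True E2'[of a] xy by simp
      next
        case False
        then have "0 \<le> D a b" "0 \<le> D a (b+1)" using less.hyps[of a b] less.hyps[of a "b+1"] eo xy by simp_all
        then show ?thesis using eo False E2[of b a] by simp
      qed
    next
      case oe
      then have "b \<ge> 1" "a \<ge> 1" using y1 xy by simp_all
      then have "0 \<le> D a b" "0 \<le> D (a+1) b" using less.hyps[of a b] less.hyps[of "a+1" b] oe xy by simp_all
      then show ?thesis using oe E3[of a b] \<open>b \<ge> 1\<close> \<open>a \<ge> 1\<close> by simp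
    next
      case oo
      show ?thesis
      proof (cases "b = 0")
        case True
        then have "0 \<le> D a 1" using less.hyps[of a 1] oo xy y1 by simp
        then show ?thesis using oo True E4'[of a] xy by simp
      next
        case False
        then have "0 \<le> D (a+1) b" "0 \<le> D a (b+1)" using less.hyps[of "a+1" b] less.hyps[of a "b+1"] oo xy by simp_all
        then show ?thesis using oo False E4[of a b] xy by simp
      qed
    qed
  qed
qed

lemma D_nonneg_abs: "int (B (x+y)) \<le> int (B x) + int (B y) + \<bar>int x - int y\<bar>"
proof (cases "y \<le> x")
  case True
  then show ?thesis using D_nonneg[OF True] unfolding D_def by simp
next
  case False
  then have "y \<ge> x" by simp
  then show ?thesis using D_nonneg[of x y] unfolding D_def by (simp add: add.commute)
qed

lemma leaves_pos: "leaves T \<ge> 1" by (induction T) auto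

lemma colless_ge: "B (leaves T) \<le> colless T"
proof (induction T)
  case Leaf
  then show ?case by simp
next
  case (Node l r)
  have "int (B (leaves l + leaves r)) \<le> int (B (leaves l)) + int (B (leaves r)) + \<bar>int (leaves l) - int (leaves r)\<bar>"
    by (rule D_nonneg_abs)
  also have "\<dots> \<le> int (colless l) + int (colless r) + \<bar>int (leaves l) - int (leaves r)\<bar>"
    using Node.IH by simp
  finally show ?case by simp
qed

function bal :: "nat \<Rightarrow> btree" where
  "bal n = (if n \<le> 1 then Leaf else Node (bal ((n+1) div 2)) (bal (n div 2)))"
  by auto
termination by (relation "measure id") auto

declare bal.simps[simp del]

lemma bal_props: "n \<ge> 1 \<Longrightarrow> leaves (bal n) = n \<and> colless (bal n) = B n"
proof (induction n rule: less_induct)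
  case (less n)
  show ?case
  proof (cases "n = 1")
    case True
    then show ?thesis by (simp add: bal.simps)
  next
    case False
    then have n2: "n \<ge> 2" using less.prems by simp
    have b: "bal n = Node (bal ((n+1) div 2)) (bal (n div 2))" using n2 by (simp add: bal.simps)
    have i1: "leaves (bal ((n+1) div 2)) = (n+1) div 2 \<and> colless (bal ((n+1) div 2)) = B ((n+1) div 2)"
      using less.IH[of "(n+1) div 2"] n2 by simp
    have i2: "leaves (bal (n div 2)) = n div 2 \<and> colless (bal (n div 2)) = B (n div 2)"
      using less.IH[of "n div 2"] n2 by simp
    consider (e) m where "n = 2*m" | (o) m where "n = 2*m+1" using par[of n] by blast
    then show ?thesis
    proof cases
      case e
      then have "(n+1) div 2 = m" "n div 2 = m" by simp_all
      then show ?thesis using b i1 i2 e B_even[of m] by simp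
    next
      case o
      then have "(n+1) div 2 = m+1" "n div 2 = m" "m \<ge> 1" using n2 by simp_all
      then show ?thesis using b i1 i2 o B_odd[of m] by simp
    qed
  qed
qed

lemma cmin_B: "n \<ge> 1 \<Longrightarrow> cmin n = B n"
  unfolding cmin_def
proof (rule Least_equality)
  assume "n \<ge> 1"
  then show "\<exists>T. leaves T = n \<and> colless T = B n" using bal_props by blast
next
  fix c assume "\<exists>T. leaves T = n \<and> colless T = c"
  then show "B n \<le> c" using colless_ge by blast
qed

lemma QB_D: "1 \<le> nb \<Longrightarrow> nb \<le> na \<Longrightarrow> na + nb = n \<Longrightarrow> (na, nb) \<in> QB n \<longleftrightarrow> D na nb = 0"
proof -
  assume a: "1 \<le> nb" "nb \<le> na" "na + nb = n"
  have c: "cmin na = B na" "cmin nb = B nb" "cmin n = B n" using a by (simp_all add: cmin_B)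
  have "(na, nb) \<in> QB n \<longleftrightarrow> B na + B nb + (na - nb) = B n" unfolding QB_def using a c by auto
  also have "\<dots> \<longleftrightarrow> int (B na) + int (B nb) + (int na - int nb) = int (B n)" using a by (simp add: of_nat_diff flip: of_nat_add) linarith
  also have "\<dots> \<longleftrightarrow> D na nb = 0" unfolding D_def using a by auto
  finally show ?thesis .
qed



definition C :: "nat \<Rightarrow> nat \<Rightarrow> bool" where
  "C x y \<longleftrightarrow> (\<exists>m. 2^m \<le> 2*(x-y) \<and> 2*(x-y) \<le> 2^(m+1) \<and> ((2^m dvd x \<and> 2^(m+1) \<le> x) \<or> 2^m dvd y))"

lemma CI: fixes x y :: nat shows "(2::nat)^m \<le> 2*(x-y) \<Longrightarrow> 2*(x-y) \<le> 2^(m+1) \<Longrightarrow> (2^m dvd x \<and> 2^(m+1) \<le> x) \<or> 2^m dvd y \<Longrightarrow> C x y"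
  unfolding C_def by blast

lemma CE: fixes x y :: nat assumes "C x y"
  obtains m where "(2::nat)^m \<le> 2*(x-y)" "2*(x-y) \<le> 2^(m+1)" "(2^m dvd x \<and> 2^(m+1) \<le> x) \<or> 2^m dvd y"
  using assms unfolding C_def by blast

lemma pw_le: "(2::nat)^i \<le> 2^j \<longleftrightarrow> i \<le> j" by simp
lemma pw_lt: "(2::nat)^i < 2^j \<longleftrightarrow> i < j" by simp
lemma pw_dvd: "i \<le> j \<Longrightarrow> (2::nat)^i dvd 2^j" by (rule le_imp_power_dvd)
lemma pw_Suc: "(2::nat)^(m+1) = 2 * 2^m" by simp
lemma pw_pos: "(2::nat)^m \<ge> 1" by simp
lemma pw_even: "i \<ge> 1 \<Longrightarrow> (2::nat) dvd 2^i" using dvd_power[of i 2] by simp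
lemma pw_half: "M \<noteq> 0 \<Longrightarrow> \<exists>P. (2::nat)^M = 2*P \<and> 2^(M+1) = 4*P"
proof -
  assume "M \<noteq> 0"
  then obtain K where "M = Suc K" by (cases M) auto
  then show ?thesis by (intro exI[of _ "2^K"]) simp
qed
lemma pw_dvd1: "(2::nat)^i dvd 1 \<Longrightarrow> i = 0" by simp
lemma ex_log: "(e::nat) \<ge> 1 \<Longrightarrow> \<exists>N. 2^N \<le> e \<and> e < 2^(N+1)"
  using ex_power_ivl1[of 2 e] by simp

lemma C_double: assumes "y < x" shows "C (2*x) (2*y) \<longleftrightarrow> C x y"
proof
  assume "C (2*x) (2*y)"
  then obtain m where h1: "2^m \<le> 2*(2*x-2*y)" and h2: "2*(2*x-2*y) \<le> 2^(m+1)"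
    and h3: "(2^m dvd 2*x \<and> 2^(m+1) \<le> 2*x) \<or> 2^m dvd 2*y" by (rule CE)
  have "m \<noteq> 0" proof assume "m=0" with h2 assms show False by simp qed
  then obtain M where M: "m = M+1" by (cases m) auto
  have d: "2*x - 2*y = 2*(x-y)" by simp
  have p1: "(2::nat)^(M+1) = 2*2^M" "(2::nat)^(M+1+1) = 2*2^(M+1)" by simp_all
  show "C x y"
  proof (rule CI[of M])
    show "2^M \<le> 2*(x-y)" using h1 unfolding M d p1 by simp
    show "2*(x-y) \<le> 2^(M+1)" using h2 unfolding M d p1 by simp
    show "(2^M dvd x \<and> 2^(M+1) \<le> x) \<or> 2^M dvd y" using h3 unfolding M p1 by simp
  qed
next
  assume "C x y"
  then obtain m where h1: "2^m \<le> 2*(x-y)" and h2: "2*(x-y) \<le> 2^(m+1)"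
    and h3: "(2^m dvd x \<and> 2^(m+1) \<le> x) \<or> 2^m dvd y" by (rule CE)
  have d: "2*x - 2*y = 2*(x-y)" by simp
  have p1: "(2::nat)^(m+1) = 2*2^m" "(2::nat)^(m+1+1) = 2*2^(m+1)" by simp_all
  show "C (2*x) (2*y)"
  proof (rule CI[of "m+1"])
    show "2^(m+1) \<le> 2*(2*x-2*y)" using h1 unfolding d p1 by simp
    show "2*(2*x-2*y) \<le> 2^(m+1+1)" using h2 unfolding d p1 by simp
    show "(2^(m+1) dvd 2*x \<and> 2^(m+1+1) \<le> 2*x) \<or> 2^(m+1) dvd 2*y" using h3 unfolding p1 by simp
  qed
qed

lemma C_oddodd: assumes "b < a" shows "\<not> C (2*a+1) (2*b+1)"
proof
  assume "C (2*a+1) (2*b+1)"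
  then obtain m where h2: "2*(2*a+1-(2*b+1)) \<le> 2^(m+1)"
    and h3: "(2^m dvd 2*a+1 \<and> 2^(m+1) \<le> 2*a+1) \<or> 2^m dvd 2*b+1" by (rule CE)
  have "m \<noteq> 0" proof assume "m=0" with h2 assms show False by simp qed
  then have t: "(2::nat) dvd 2^m" using pw_even by simp
  have "2^m dvd 2*a+1 \<or> 2^m dvd 2*b+1" using h3 by blast
  then have "(2::nat) dvd 2*a+1 \<or> 2 dvd 2*b+1" using dvd_trans[OF t] by blast
  then show False by simp
qed

lemma C_y1: assumes "a \<ge> 1" shows "C (2*a) 1 \<longleftrightarrow> a = 1"
proof
  assume "C (2*a) 1"
  then obtain m where h1: "2^m \<le> 2*(2*a-1)" and h2: "2*(2*a-1) \<le> 2^(m+1)"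
    and h3: "(2^m dvd 2*a \<and> 2^(m+1) \<le> 2*a) \<or> 2^m dvd (1::nat)" by (rule CE)
  show "a = 1"
  proof (cases "2^m dvd (1::nat)")
    case True
    then have "m = 0" by simp
    then show ?thesis using h2 assms by simp
  next
    case False
    then have "2^(m+1) \<le> 2*a" using h3 by simp
    then show ?thesis using h2 assms by linarith
  qed
next
  assume "a = 1"
  then show "C (2*a) 1" by (intro CI[of 0]) auto
qed



lemma E2C: assumes b1: "1 \<le> b" and ba: "b < a"
  shows "C (2*a) (2*b+1) \<longleftrightarrow> C a b \<and> (a = b+1 \<or> C a (b+1))"
proof (cases "a = b+1")
  case True
  have "C a b" by (rule CI[of 0]) (use True in auto)
  moreover have "C (2*a) (2*b+1)" by (rule CI[of 0]) (use True in auto)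
  ultimately show ?thesis using True by simp
next
  case False
  define e where "e = a - b"
  have e2: "e \<ge> 2" using False ba e_def by simp
  have d1: "2*a - (2*b+1) = 2*e - 1" "a - b = e" "a - (b+1) = e - 1" using e_def ba by auto
  show ?thesis
  proof
    assume "C (2*a) (2*b+1)"
    then obtain m where h1: "2^m \<le> 2*(2*a-(2*b+1))" and h2: "2*(2*a-(2*b+1)) \<le> 2^(m+1)"
      and h3: "(2^m dvd 2*a \<and> 2^(m+1) \<le> 2*a) \<or> 2^m dvd 2*b+1" by (rule CE)
    have h1': "2^m \<le> 2*(2*e-1)" and h2': "2*(2*e-1) \<le> 2^(m+1)" using h1 h2 d1 by simp_all
    have "m \<noteq> 0" proof assume "m=0" then show False using h2' e2 by simp qed
    then obtain M where M: "m = M+1" by (cases m) auto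
    have t: "(2::nat) dvd 2^m" using pw_even \<open>m \<noteq> 0\<close> by simp
    have "\<not> 2^m dvd 2*b+1"
    proof
      assume "2^m dvd 2*b+1" then have "(2::nat) dvd 2*b+1" using dvd_trans[OF t] by blast
      then show False by simp
    qed
    then have h3': "2^(M+1) dvd 2*a" "2^(M+1+1) \<le> 2*a" using h3 M by auto
    have aM: "2^M dvd a" using h3'(1) by simp
    have aM2: "2^(M+1) \<le> a" using h3'(2) by simp
    have g1: "2^M \<le> 2*e-1" using h1' M by simp
    have g2: "2*e-1 \<le> 2*2^M" using h2' M by simp
    have "M \<noteq> 0" proof assume "M=0" then show False using g2 e2 by simp qed
    then obtain P where P: "(2::nat)^M = 2*P" "(2::nat)^(M+1) = 4*P" using pw_half[OF \<open>M \<noteq> 0\<close>] by blast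
    have i1: "2*P \<le> 2*e-2" "2*e \<le> 4*P" using g1 g2 unfolding P by arith+
    have "C a b" by (rule CI[of M]) (use i1 aM aM2 d1 P in auto)
    moreover have "C a (b+1)" by (rule CI[of M]) (use i1 aM aM2 d1 P in auto)
    ultimately show "C a b \<and> (a = b+1 \<or> C a (b+1))" by simp
  next
    assume "C a b \<and> (a = b+1 \<or> C a (b+1))"
    then have c1: "C a b" and c2: "C a (b+1)" using False by auto
    obtain m1 where A1: "2^m1 \<le> 2*(a-b)" and A2: "2*(a-b) \<le> 2^(m1+1)"
      and A3: "(2^m1 dvd a \<and> 2^(m1+1) \<le> a) \<or> 2^m1 dvd b" using c1 by (rule CE)
    obtain m2 where B1: "2^m2 \<le> 2*(a-(b+1))" and B2: "2*(a-(b+1)) \<le> 2^(m2+1)"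
      and B3: "(2^m2 dvd a \<and> 2^(m2+1) \<le> a) \<or> 2^m2 dvd b+1" using c2 by (rule CE)
    have one: "1 \<le> 2*e-1" using e2 by simp
    obtain M where L1: "2^M \<le> 2*e-1" and L2: "2*e-1 < 2^(M+1)" using ex_log[OF one] by blast
    have "M \<noteq> 0" proof assume "M=0" then show False using L2 e2 by simp qed
    then obtain P where P: "(2::nat)^M = 2*P" "(2::nat)^(M+1) = 4*P" using pw_half[OF \<open>M \<noteq> 0\<close>] by blast
    have LP: "2*P \<le> 2*e-2" "2*e \<le> 4*P" using L1 L2 unfolding P by arith+
    have "(2::nat)^M < 2^(m1+1)" using L1 A2 d1 e2 by linarith
    then have "M < m1+1" by (simp only: pw_lt)
    then have Mm1: "M \<le> m1" by simp
    have "(2::nat)^M \<le> 2^(m2+1)" using LP B2 d1 P by linarith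
    then have Mm2: "M \<le> m2+1" by (simp only: pw_le)
    have "(2::nat)^m2 < 2^(M+1)" using LP B1 d1 P e2 by simp
    then have "m2 < M+1" by (simp only: pw_lt)
    then have m2M: "m2 \<le> M" by simp
    have G: "2^M dvd a \<and> 2^(M+1) \<le> a"
    proof (cases "2^m1 dvd a \<and> 2^(m1+1) \<le> a")
      case True
      have "(2::nat)^M dvd 2^m1" using pw_dvd Mm1 by simp
      then have "2^M dvd a" using True dvd_trans by blast
      moreover have "(2::nat)^(M+1) \<le> 2^(m1+1)" using Mm1 by (simp only: pw_le)
      ultimately show ?thesis using True by linarith
    next
      case A3F: False
      then have bm1: "2^m1 dvd b" using A3 by blast
      have "(2::nat) dvd 2^m1" using pw_even Mm1 \<open>M \<noteq> 0\<close> by simp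
      then have b2: "(2::nat) dvd b" using bm1 dvd_trans by blast
      show ?thesis
      proof (cases "2^m2 dvd a \<and> 2^(m2+1) \<le> a")
        case True
        show ?thesis
        proof (cases "m2 = M")
          case True
          then show ?thesis using \<open>2^m2 dvd a \<and> 2^(m2+1) \<le> a\<close> by simp
        next
          case False
          then have m2M': "m2 + 1 = M" using m2M Mm2 by simp
          have "(2::nat)^m2 dvd 2^m1" using pw_dvd m2M Mm1 by simp
          then have "2^m2 dvd b" using bm1 dvd_trans by blast
          then have "2^m2 dvd a - b" using True dvd_diff_nat by blast
          then have dE: "2^m2 dvd e" using d1 by simp
          have "2*(e-1) = (2::nat)^(m2+1)" using B2 LP d1 P m2M' by (metis le_antisym diff_mult_distrib2 mult_1_right)
          then have "e = 2^m2 + 1" using e2 by simp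
          then have x: "(2::nat)^m2 dvd 2^m2 + 1" using dE by (simp only:)
          have "2^m2 dvd (1::nat)" using dvd_add_right_iff[OF dvd_refl, of "(2::nat)^m2" 1] x by blast
          then have "m2 = 0" by simp
          then have "e = 2" using \<open>e = 2^m2 + 1\<close> by simp
          then have "P = 1" using LP by simp
          then show ?thesis using P b2 d1 \<open>e = 2\<close> b1 by auto presburger
        qed
      next
        case False
        then have "2^m2 dvd b+1" using B3 by blast
        have "m2 = 0"
        proof (rule ccontr)
          assume "m2 \<noteq> 0"
          then have "(2::nat) dvd 2^m2" using pw_even by simp
          then have "(2::nat) dvd b+1" using \<open>2^m2 dvd b+1\<close> dvd_trans by blast
          then show False using b2 by simp
        qed
        then have "e = 2" using B2 d1 e2 by simp
        then have "P = 1" using LP by simp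
        then show ?thesis using P b2 d1 \<open>e = 2\<close> b1 by auto presburger
      qed
    qed
    show "C (2*a) (2*b+1)"
    proof (rule CI[of "M+1"])
      show "2^(M+1) \<le> 2*(2*a - (2*b+1))" using LP P d1 by simp
      show "2*(2*a - (2*b+1)) \<le> 2^(M+1+1)" using LP P d1 by simp
      have "2^(M+1) dvd 2*a" using G by simp
      moreover have "2^(M+1+1) \<le> 2*a" using G by simp
      ultimately show "(2^(M+1) dvd 2*a \<and> 2^(M+1+1) \<le> 2*a) \<or> 2^(M+1) dvd 2*b+1" by simp
    qed
  qed
qed



lemma E3C: assumes b1: "1 \<le> b" and ba: "b \<le> a"
  shows "C (2*a+1) (2*b) \<longleftrightarrow> (a = b \<or> C a b) \<and> C (a+1) b"
proof (cases "a = b")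
  case True
  have "C (a+1) b" by (rule CI[of 0]) (use True in auto)
  moreover have "C (2*a+1) (2*b)" by (rule CI[of 0]) (use True in auto)
  ultimately show ?thesis using True by simp
next
  case False
  define e where "e = a - b"
  have e1: "e \<ge> 1" using False ba e_def by simp
  have d1: "2*a+1 - 2*b = 2*e + 1" "a - b = e" "a + 1 - b = e + 1" using e_def ba by auto
  show ?thesis
  proof
    assume "C (2*a+1) (2*b)"
    then obtain m where h1: "2^m \<le> 2*(2*a+1-2*b)" and h2: "2*(2*a+1-2*b) \<le> 2^(m+1)"
      and h3: "(2^m dvd 2*a+1 \<and> 2^(m+1) \<le> 2*a+1) \<or> 2^m dvd 2*b" by (rule CE)
    have h1': "2^m \<le> 2*(2*e+1)" and h2': "2*(2*e+1) \<le> 2^(m+1)" using h1 h2 d1 by simp_all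
    have "m \<noteq> 0" proof assume "m=0" then show False using h2' e1 by simp qed
    then obtain M where M: "m = M+1" by (cases m) auto
    have t: "(2::nat) dvd 2^m" using pw_even \<open>m \<noteq> 0\<close> by simp
    have "\<not> 2^m dvd 2*a+1"
    proof
      assume "2^m dvd 2*a+1" then have "(2::nat) dvd 2*a+1" using dvd_trans[OF t] by blast
      then show False by simp
    qed
    then have h3': "2^(M+1) dvd 2*b" using h3 M by blast
    have bM: "2^M dvd b" using h3' by simp
    have g1: "2^M \<le> 2*e+1" using h1' M by simp
    have g2: "2*e+1 \<le> 2*2^M" using h2' M by simp
    have "M \<noteq> 0" proof assume "M=0" then show False using g2 e1 by simp qed
    then obtain P where P: "(2::nat)^M = 2*P" "(2::nat)^(M+1) = 4*P" using pw_half[OF \<open>M \<noteq> 0\<close>] by blast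
    have i1: "2*P \<le> 2*e" "2*e+2 \<le> 4*P" using g1 g2 unfolding P by arith+
    have "C a b" by (rule CI[of M]) (use i1 bM d1 P in auto)
    moreover have "C (a+1) b" by (rule CI[of M]) (use i1 bM d1 P in auto)
    ultimately show "(a = b \<or> C a b) \<and> C (a+1) b" by simp
  next
    assume "(a = b \<or> C a b) \<and> C (a+1) b"
    then have c1: "C a b" and c2: "C (a+1) b" using False by auto
    obtain m1 where A1: "2^m1 \<le> 2*(a-b)" and A2: "2*(a-b) \<le> 2^(m1+1)"
      and A3: "(2^m1 dvd a \<and> 2^(m1+1) \<le> a) \<or> 2^m1 dvd b" using c1 by (rule CE)
    obtain m2 where B1: "2^m2 \<le> 2*(a+1-b)" and B2: "2*(a+1-b) \<le> 2^(m2+1)"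
      and B3: "(2^m2 dvd a+1 \<and> 2^(m2+1) \<le> a+1) \<or> 2^m2 dvd b" using c2 by (rule CE)
    obtain N where L1: "2^N \<le> e" and L2: "e < 2^(N+1)" using ex_log[OF e1] by blast
    have pN: "(2::nat)^(N+1) = 2*2^N" "(2::nat)^(N+1+1) = 4*2^N" "(2::nat)^(N+1+1+1) = 8*2^N" by simp_all
    have "(2::nat)^m1 < 2^(N+1+1)" using A2 A1 L2 d1 pN by linarith
    then have "m1 < N+1+1" by (simp only: pw_lt)
    then have m1N: "m1 \<le> N+1" by simp
    have "(2::nat)^(N+1) \<le> 2^(m1+1)" using A2 L1 d1 pN by linarith
    then have Nm1: "N \<le> m1" by (simp only: pw_le)
    have "(2::nat)^(N+1) < 2^(m2+1)" using B2 L1 d1 pN by linarith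
    then have "N+1 < m2+1" by (simp only: pw_lt)
    then have Nm2: "N+1 \<le> m2" by simp
    have G: "2^(N+1) dvd b"
    proof (cases "2^m2 dvd b")
      case True
      have "(2::nat)^(N+1) dvd 2^m2" by (rule pw_dvd[OF Nm2])
      then show ?thesis using True dvd_trans by blast
    next
      case B3F: False
      then have am2: "2^m2 dvd a+1" using B3 by blast
      have "(2::nat) dvd 2^m2" using pw_even Nm2 by simp
      then have a2: "(2::nat) dvd a+1" using am2 dvd_trans by blast
      have "(2::nat)^(N+1) dvd 2^m2" by (rule pw_dvd[OF Nm2])
      then have aN: "2^(N+1) dvd a+1" using am2 dvd_trans by blast
      show ?thesis
      proof (cases "2^m1 dvd b \<and> m1 = N+1")
        case True
        then show ?thesis by metis
      next
        case False
        have "e = 1"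
        proof (cases "2^m1 dvd a \<and> 2^(m1+1) \<le> a")
          case True
          have "m1 = 0"
          proof (rule ccontr)
            assume "m1 \<noteq> 0"
            then have "(2::nat) dvd 2^m1" using pw_even by simp
            then have "(2::nat) dvd a" using True dvd_trans by blast
            then show False using a2 by simp
          qed
          then show "e = 1" using A2 d1 e1 by simp
        next
          case A3F: False
          then have bm1: "2^m1 dvd b" using A3 by blast
          then have "m1 \<noteq> N+1" using False by simp
          then have "m1 = N" using m1N Nm1 by simp
          then have "e = 2^N" using A2 L1 d1 pN by simp
          have bN: "2^N dvd b" using bm1 \<open>m1 = N\<close> by simp
          have "(2::nat)^N dvd 2^(N+1)" by (rule pw_dvd) simp
          then have "2^N dvd a+1" using aN dvd_trans by blast
          moreover have "a + 1 = b + (2^N + 1)" using d1 \<open>e = 2^N\<close> ba by simp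
          ultimately have x: "2^N dvd b + (2^N + 1)" by simp
          have "2^N dvd (2^N + 1::nat)" using dvd_add_right_iff[OF bN, of "2^N+1"] x by blast
          then have "2^N dvd (1::nat)" using dvd_add_right_iff[OF dvd_refl, of "(2::nat)^N" 1] by blast
          then have "N = 0" by simp
          then show "e = 1" using \<open>e = 2^N\<close> by simp
        qed
        then have "(2::nat)^N \<le> 2^0" using L1 by simp
        then have "N \<le> 0" by (simp only: pw_le)
        then have "N = 0" by simp
        moreover have "a + 1 = b + 2" using \<open>e = 1\<close> d1 ba by simp
        ultimately show ?thesis using a2 by simp
      qed
    qed
    show "C (2*a+1) (2*b)"
    proof (rule CI[of "N+1+1"])
      show "2^(N+1+1) \<le> 2*(2*a+1 - 2*b)" using L1 pN d1 by simp
      show "2*(2*a+1 - 2*b) \<le> 2^(N+1+1+1)" using L2 pN d1 by simp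
      have "2^(N+1+1) dvd 2*b" using G by simp
      then show "(2^(N+1+1) dvd 2*a+1 \<and> 2^(N+1+1+1) \<le> 2*a+1) \<or> 2^(N+1+1) dvd 2*b" by simp
    qed
  qed
qed



lemma Dchar: "1 \<le> y \<Longrightarrow> y < x \<Longrightarrow> (D x y = 0 \<longleftrightarrow> C x y)"
proof (induction "x+y" arbitrary: x y rule: less_induct)
  case less
  note IH = less.hyps
  have y1: "1 \<le> y" and xy: "y < x" using less.prems by auto
  consider (ee) a b where "x = 2*a" "y = 2*b" | (eo) a b where "x = 2*a" "y = 2*b+1"
    | (oe) a b where "x = 2*a+1" "y = 2*b" | (oo) a b where "x = 2*a+1" "y = 2*b+1"
    using par[of x] par[of y] by blast
  then show ?case
  proof cases
    case ee
    then have "b \<ge> 1" "b < a" using y1 xy by auto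
    then have "D a b = 0 \<longleftrightarrow> C a b" using IH[of a b] ee by simp
    then show ?thesis using ee E1 C_double[OF \<open>b < a\<close>] by simp
  next
    case eo
    then have ba: "b < a" using xy by simp
    show ?thesis
    proof (cases "b = 0")
      case True
      have a1: "a \<ge> 1" using ba by simp
      have "0 \<le> D a 1" using D_nonneg a1 by simp
      have eq: "D x y = D a 1 + (int a - 1)" using eo True E2'[OF a1] by simp
      have "D x y = 0 \<longleftrightarrow> a = 1"
      proof
        assume "D x y = 0"
        then have "int a \<le> 1" using eq \<open>0 \<le> D a 1\<close> by linarith
        then show "a = 1" using a1 by simp
      next
        assume "a = 1"
        then show "D x y = 0" using eq D_xx[of 1] by simp
      qed
      then show ?thesis using eo True C_y1[OF a1] by simp
    next
      case False
      then have b1: "b \<ge> 1" by simp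
      have n1: "0 \<le> D a b" "0 \<le> D a (b+1)" using D_nonneg ba by simp_all
      have i1: "D a b = 0 \<longleftrightarrow> C a b" using IH[of a b] eo ba b1 by simp
      have i2: "D a (b+1) = 0 \<longleftrightarrow> (a = b+1 \<or> C a (b+1))"
      proof (cases "a = b+1")
        case True
        then show ?thesis using D_xx by simp
      next
        case False
        then show ?thesis using IH[of a "b+1"] eo ba by simp
      qed
      have "D x y = 0 \<longleftrightarrow> D a b = 0 \<and> D a (b+1) = 0" using eo E2[OF b1] n1 by auto
      then show ?thesis using i1 i2 E2C[OF b1 ba] eo by simp
    qed
  next
    case oe
    then have b1: "b \<ge> 1" and ba: "b \<le> a" using y1 xy by auto
    then have a1: "a \<ge> 1" by simp
    have n1: "0 \<le> D a b" "0 \<le> D (a+1) b" using D_nonneg ba by simp_all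
    have i1: "D a b = 0 \<longleftrightarrow> (a = b \<or> C a b)"
    proof (cases "a = b")
      case True
      then show ?thesis using D_xx by simp
    next
      case False
      then show ?thesis using IH[of a b] oe ba b1 by simp
    qed
    have i2: "D (a+1) b = 0 \<longleftrightarrow> C (a+1) b" using IH[of "a+1" b] oe ba b1 by simp
    have "D x y = 0 \<longleftrightarrow> D a b = 0 \<and> D (a+1) b = 0" using oe E3[OF a1 b1] n1 by auto
    then show ?thesis using i1 i2 E3C[OF b1 ba] oe by simp
  next
    case oo
    then have ba: "b < a" using xy by simp
    then have a1: "a \<ge> 1" by simp
    have "D x y > 0"
    proof (cases "b = 0")
      case True
      have "0 \<le> D a 1" using D_nonneg a1 by simp
      then show ?thesis using oo True E4'[OF a1] by simp
    next
      case False
      then have b1: "b \<ge> 1" by simp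
      have "0 \<le> D (a+1) b" "0 \<le> D a (b+1)" using D_nonneg ba by simp_all
      then show ?thesis using oo E4[OF a1 b1] by simp
    qed
    then show ?thesis using C_oddodd[OF ba] oo by simp
  qed
qed



lemma odd_decomp: "(r::nat) \<ge> 1 \<Longrightarrow> \<exists>j s. r = 2^j * (2*s+1)"
proof (induction r rule: less_induct)
  case (less r)
  show ?case
  proof (cases "even r")
    case True
    then obtain r' where r': "r = 2*r'" by blast
    then have "r' \<ge> 1" "r' < r" using less.prems by auto
    then obtain j s where "r' = 2^j*(2*s+1)" using less.IH by blast
    then have "r = 2^(j+1)*(2*s+1)" using r' by simp
    then show ?thesis by blast
  next
    case False
    then obtain s where "r = 2*s+1" using oddE by blast
    then have "r = 2^0*(2*s+1)" by simp
    then show ?thesis by blast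
  qed
qed

lemma rsplit: assumes "(0::nat) < r" "2*r < 2^m"
  shows "\<exists>j l s. m = j + l \<and> l \<ge> 2 \<and> s < 2^(l-2) \<and> r = 2^j*(2*s+1)"
proof -
  obtain j s where r: "r = 2^j*(2*s+1)" using odd_decomp assms(1) by (metis One_nat_def Suc_leI)
  have "(2::nat)^j \<le> r" using r by simp
  then have "(2::nat)^(j+1) < 2^m" using assms(2) by simp
  then have "j+1 < m" by (simp only: pw_lt)
  then obtain l where l: "m = j + l" "l \<ge> 2" by (metis add.commute le_add_diff_inverse2 less_diff_conv nat_less_le add_leD1 Suc_eq_plus1 Suc_leI one_add_one plus_1_eq_Suc)
  obtain q where q: "l = q + 2" using l(2) by (metis add.commute le_add_diff_inverse)
  have "2^j * (2*(2*s+1)) < (2::nat)^j * 2^l" using assms(2) r l(1) by (simp add: power_add algebra_simps)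
  then have "0 < (2::nat)^j \<and> 2*(2*s+1) < (2::nat)^l" by (simp only: mult_less_cancel1)
  then have "2*(2*s+1) < (2::nat)^l" by blast
  then have "2*(2*s+1) < 4*(2::nat)^q" using q by (simp add: power_add)
  then have "s < 2^(l-2)" using q by simp
  then show ?thesis using l r by blast
qed

definition Disj :: "nat \<Rightarrow> nat \<Rightarrow> nat \<Rightarrow> bool" where
  "Disj n na nb \<longleftrightarrow>
     (\<exists>k p. p \<ge> 1 \<and> n = 2^k * (2*p + 1) \<and> na = 2^k * (p + 1) \<and> nb = 2^k * p)
   \<or> (\<exists>k l p t. l \<ge> 2 \<and> p \<ge> 1 \<and> t < 2^(l-2) \<and>
         n = 2^k * (2^l * (2*p + 1) + 2*t + 1) \<and>
         na = 2^(k+l) * (p + 1) \<and> nb = 2^k * (2^l * p + 2*t + 1))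
   \<or> (\<exists>k l p t. l \<ge> 2 \<and> p \<ge> 1 \<and> t < 2^(l-2) \<and>
         n = 2^k * (2^l * (2*p + 1) - (2*t + 1)) \<and>
         na = 2^k * (2^l * (p + 1) - (2*t + 1)) \<and> nb = 2^(k+l) * p)"

lemma D1I: "p \<ge> 1 \<Longrightarrow> n = 2^k * (2*p + 1) \<Longrightarrow> na = 2^k * (p + 1) \<Longrightarrow> nb = 2^k * p \<Longrightarrow> Disj n na nb"
  unfolding Disj_def by blast
lemma D2I: "l \<ge> 2 \<Longrightarrow> p \<ge> 1 \<Longrightarrow> t < 2^(l-2) \<Longrightarrow> n = 2^k * (2^l * (2*p + 1) + 2*t + 1) \<Longrightarrow>
         na = 2^(k+l) * (p + 1) \<Longrightarrow> nb = 2^k * (2^l * p + 2*t + 1) \<Longrightarrow> Disj n na nb"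
  unfolding Disj_def by blast
lemma D3I: "l \<ge> 2 \<Longrightarrow> p \<ge> 1 \<Longrightarrow> t < 2^(l-2) \<Longrightarrow> n = 2^k * (2^l * (2*p + 1) - (2*t + 1)) \<Longrightarrow>
         na = 2^k * (2^l * (p + 1) - (2*t + 1)) \<Longrightarrow> nb = 2^(k+l) * p \<Longrightarrow> Disj n na nb"
  unfolding Disj_def by blast

lemma C_Disj: assumes nb1: "1 \<le> nb" and ab: "nb < na" and n: "na + nb = n" and c: "C na nb"
  shows "Disj n na nb"
proof -
  obtain m where h1: "2^m \<le> 2*(na-nb)" and h2: "2*(na-nb) \<le> 2^(m+1)"
    and h3: "(2^m dvd na \<and> 2^(m+1) \<le> na) \<or> 2^m dvd nb" using c by (rule CE)
  define d where "d = na - nb"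
  have dm: "d \<le> 2^m" using h2 d_def by simp
  define r where "r = 2^m - d"
  have r1: "d + r = 2^m" "2*r \<le> 2^m" using dm h1 d_def r_def by auto
  have nad: "na = nb + d" using d_def ab by simp
  consider (z) "r = 0" | (h) "2*r = 2^m" | (g) "0 < r" "2*r < 2^m" using r1 by linarith
  note rc = this
  show ?thesis
  proof (cases "2^m dvd na \<and> 2^(m+1) \<le> na")
    case True
    then obtain q where q: "na = 2^m*q" by blast
    have "2^m * 2 \<le> 2^m * q" using True q by simp
    then have "2 \<le> q" by simp
    then obtain p where p: "q = p+1" "p \<ge> 1" by (intro that[of "q-1"]) auto
    have na': "na = 2^m*p + 2^m" using q p by simp
    have nb': "nb = 2^m*p + r" using na' nad r1 by linarith
    from rc show ?thesis
    proof cases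
      case z
      show ?thesis by (rule D1I[of p _ m]) (use p na' nb' z n in \<open>simp_all add: algebra_simps\<close>)
    next
      case h
      then have "m \<noteq> 0" by (cases m) auto
      then obtain M where M: "m = M+1" by (cases m) auto
      have rM: "r = 2^M" using h M by simp
      show ?thesis by (rule D1I[of "2*p+1" _ M]) (use p na' nb' rM M n in \<open>simp_all add: algebra_simps\<close>)
    next
      case g
      obtain j l s where jl: "m = j + l" "l \<ge> 2" "s < 2^(l-2)" "r = 2^j*(2*s+1)" using rsplit[OF g] by blast
      show ?thesis by (rule D2I[of l p s n j]) (use p na' nb' jl n in \<open>simp_all add: algebra_simps power_add\<close>)
    qed
  next
    case False
    then have "2^m dvd nb" using h3 by blast
    then obtain p where p: "nb = 2^m*p" by blast
    have p1: "p \<ge> 1" using p nb1 by (cases p) auto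
    have na': "na + r = 2^m*p + 2^m" using p nad r1 by linarith
    from rc show ?thesis
    proof cases
      case z
      show ?thesis by (rule D1I[of p _ m]) (use p1 p na' z n in \<open>simp_all add: algebra_simps\<close>)
    next
      case h
      then have "m \<noteq> 0" by (cases m) auto
      then obtain M where M: "m = M+1" by (cases m) auto
      have rM: "r = 2^M" using h M by simp
      have "na = 2^M * (2*p+1)" using na' rM M by (simp add: algebra_simps)
      then show ?thesis using p1 p n M by (intro D1I[of "2*p" _ M]) (simp_all add: algebra_simps)
    next
      case g
      obtain j l s where jl: "m = j + l" "l \<ge> 2" "s < 2^(l-2)" "r = 2^j*(2*s+1)" using rsplit[OF g] by blast
      define J where "J = (2::nat)^j"
      define Lp where "Lp = (2::nat)^l"
      have mJ: "(2::nat)^m = J*Lp" using jl J_def Lp_def by (simp add: power_add)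
      have sL: "2*s+1 < Lp"
      proof -
        obtain w where w: "l = w + 2" using jl(2) by (intro that[of "l-2"]) auto
        have "Lp = 2^w * 4" using w Lp_def by (simp add: power_add)
        then show ?thesis using jl(3) w by simp
      qed
      define u where "u = Lp*(p+1) - (2*s+1)"
      have u1: "Lp*(p+1) = u + (2*s+1)" using sL u_def by (simp add: algebra_simps)
      have u2: "Lp*(2*p+1) - (2*s+1) = u + Lp*p" using u1 by (simp add: algebra_simps)
      have "J*(Lp*(p+1)) = J*u + J*(2*s+1)" using u1 by (simp add: algebra_simps)
      then have naJ: "na = J*u" using na' mJ jl(4) J_def by (simp add: algebra_simps)
      show ?thesis
      proof (rule D3I[of l p s n j])
        show "l \<ge> 2" "p \<ge> 1" "s < 2^(l-2)" using jl p1 by auto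
        show "na = 2^j * (2^l * (p + 1) - (2*s + 1))" using naJ u_def J_def Lp_def by simp
        show "nb = 2^(j+l) * p" using p jl by simp
        show "n = 2^j * (2^l * (2*p + 1) - (2*s + 1))"
          using u2 naJ p mJ n J_def Lp_def by (simp add: algebra_simps)
      qed
    qed
  qed
qed

lemma Disj_C: assumes nb1: "1 \<le> nb" and ab: "nb < na" and n: "na + nb = n" and dj: "Disj n na nb"
  shows "C na nb"
proof -
  consider (i) k p where "p \<ge> 1" "n = 2^k * (2*p + 1)" "na = 2^k * (p + 1)" "nb = 2^k * p"
    | (ii) k l p t where "l \<ge> 2" "p \<ge> 1" "t < 2^(l-2)" "n = 2^k * (2^l * (2*p + 1) + 2*t + 1)"
         "na = 2^(k+l) * (p + 1)" "nb = 2^k * (2^l * p + 2*t + 1)"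
    | (iii) k l p t where "l \<ge> 2" "p \<ge> 1" "t < 2^(l-2)" "n = 2^k * (2^l * (2*p + 1) - (2*t + 1))"
         "na = 2^k * (2^l * (p + 1) - (2*t + 1))" "nb = 2^(k+l) * p"
    using dj unfolding Disj_def by blast
  then show ?thesis
  proof cases
    case i
    have "na - nb = 2^k" using i by (simp add: algebra_simps)
    then show ?thesis using i by (intro CI[of k]) simp_all
  next
    case ii
    define K where "K = (2::nat)^k"
    define Lp where "Lp = (2::nat)^l"
    define X where "X = K*Lp"
    define Y where "Y = K*(2*t+1)"
    obtain w where w: "l = w + 2" using ii(1) by (intro that[of "l-2"]) auto
    have "Lp = 2^w * 4" using w Lp_def by (simp add: power_add)
    then have "2*(2*t+1) \<le> Lp" using ii(3) w by simp
    then have "K*(2*(2*t+1)) \<le> K*Lp" by (rule mult_le_mono2)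
    then have YX: "2*Y \<le> X" unfolding X_def Y_def by (simp add: algebra_simps)
    have mX: "(2::nat)^(k+l) = X" unfolding X_def K_def Lp_def by (simp add: power_add)
    have na': "na = X*p + X" using ii(5) mX by (simp add: algebra_simps)
    have nb': "nb = X*p + Y" using ii(6) unfolding X_def Y_def K_def Lp_def by (simp add: algebra_simps)
    have "X \<le> X*p" using ii(2) by simp
    have d: "na - nb = X - Y" using na' nb' by simp
    show ?thesis
    proof (rule CI[of "k+l"])
      show "2^(k+l) \<le> 2*(na-nb)" using d mX YX by simp
      show "2*(na-nb) \<le> 2^(k+l+1)" using d mX YX by simp
      have "2^(k+l) dvd na" using ii(5) by simp
      moreover have "2^(k+l+1) \<le> na" using mX na' \<open>X \<le> X*p\<close> by simp
      ultimately show "(2^(k+l) dvd na \<and> 2^(k+l+1) \<le> na) \<or> 2^(k+l) dvd nb" by simp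
    qed
  next
    case iii
    define K where "K = (2::nat)^k"
    define Lp where "Lp = (2::nat)^l"
    define X where "X = K*Lp"
    define Y where "Y = K*(2*t+1)"
    obtain w where w: "l = w + 2" using iii(1) by (intro that[of "l-2"]) auto
    have "Lp = 2^w * 4" using w Lp_def by (simp add: power_add)
    then have L2: "2*(2*t+1) \<le> Lp" using iii(3) w by simp
    then have "K*(2*(2*t+1)) \<le> K*Lp" by (rule mult_le_mono2)
    then have YX: "2*Y \<le> X" unfolding X_def Y_def by (simp add: algebra_simps)
    have mX: "(2::nat)^(k+l) = X" unfolding X_def K_def Lp_def by (simp add: power_add)
    define u where "u = Lp*(p+1) - (2*t+1)"
    have u1: "Lp*(p+1) = u + (2*t+1)" using L2 u_def by (simp add: algebra_simps)
    have "K*(Lp*(p+1)) = K*u + Y" using u1 Y_def by (simp add: algebra_simps)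
    moreover have "na = K*u" using iii(5) u_def K_def Lp_def by simp
    moreover have "K*(Lp*(p+1)) = X*p + X" unfolding X_def by (simp add: algebra_simps)
    ultimately have na': "na + Y = X*p + X" by linarith
    have nb': "nb = X*p" using iii(6) mX by simp
    have d: "na - nb = X - Y" using na' nb' by simp
    show ?thesis
    proof (rule CI[of "k+l"])
      show "2^(k+l) \<le> 2*(na-nb)" using d mX YX by simp
      show "2*(na-nb) \<le> 2^(k+l+1)" using d mX YX by simp
      have "2^(k+l) dvd nb" using iii(6) by simp
      then show "(2^(k+l) dvd na \<and> 2^(k+l+1) \<le> na) \<or> 2^(k+l) dvd nb" by simp
    qed
  qed
qed

theorem proposition2:
  fixes n na nb :: nat
  assumes "n \<ge> 2" and "na \<ge> 1" and "nb \<ge> 1" and "na \<ge> nb" and "na + nb = n"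
  shows "(na = nb \<longrightarrow> (na, nb) \<in> QB n) \<and>
         (na > nb \<longrightarrow>
            ((na, nb) \<in> QB n \<longleftrightarrow>
               (\<exists>k p. p \<ge> 1 \<and> n = 2^k * (2*p + 1) \<and> na = 2^k * (p + 1) \<and> nb = 2^k * p)
             \<or> (\<exists>k l p t. l \<ge> 2 \<and> p \<ge> 1 \<and> t < 2^(l-2) \<and>
                   n = 2^k * (2^l * (2*p + 1) + 2*t + 1) \<and>
                   na = 2^(k+l) * (p + 1) \<and> nb = 2^k * (2^l * p + 2*t + 1))
             \<or> (\<exists>k l p t. l \<ge> 2 \<and> p \<ge> 1 \<and> t < 2^(l-2) \<and>
                   n = 2^k * (2^l * (2*p + 1) - (2*t + 1)) \<and>
                   na = 2^k * (2^l * (p + 1) - (2*t + 1)) \<and> nb = 2^(k+l) * p)))"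
proof -
  have q: "(na, nb) \<in> QB n \<longleftrightarrow> D na nb = 0" using QB_D assms by blast
  have p1: "na = nb \<longrightarrow> (na, nb) \<in> QB n"
  proof
    assume "na = nb"
    then have "D na nb = 0" using D_xx by simp
    then show "(na, nb) \<in> QB n" using q by simp
  qed
  have p2: "na > nb \<longrightarrow> ((na, nb) \<in> QB n \<longleftrightarrow> Disj n na nb)"
  proof
    assume ab: "na > nb"
    have "(na, nb) \<in> QB n \<longleftrightarrow> C na nb" using q Dchar[OF assms(3) ab] by simp
    also have "\<dots> \<longleftrightarrow> Disj n na nb" using C_Disj[OF assms(3) ab assms(5)] Disj_C[OF assms(3) ab assms(5)] by blast
    finally show "(na, nb) \<in> QB n \<longleftrightarrow> Disj n na nb" .
  qed
  show ?thesis using p1 p2 unfolding Disj_def by blast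
qed

end
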